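(* Let $C_{1/3}$ be the middle-third Cantor set and $C(1/3)=C_{1/3}\times C_{1/3}$. For every $\mathbf{t}\in C(1/3)$, the pinned distance set $\Delta_{\mathbf{t}}(C(1/3))=\{\|\mathbf{c}-\mathbf{t}\|_2:\mathbf{c}\in C(1/3)\}$ has non-empty interior.
   Context: $C_{1/3}=\{\tfrac23\sum_{k\ge1}a_k3^{-(k-1)}:a_k\in\{0,1\}\}$; $\|\cdot\|_2$ is the Euclidean norm on $\mathbb{R}^2$. *)

theory Defs
  imports "HOL-Analysis.Analysis"
begin

text \<open>Middle-third Cantor set, defined via digit expansions as in the paper:
  C = { 2/3 * sum_{k>=1} a_k 3^{-(k-1)} : a_k in {0,1} }. Index shifted to start at 0.\<close>
definition cantor_third :: "real set" where
  "cantor_third = {(2/3) * (\<Sum>k. a k * (1/3) ^ k) | a :: nat \<Rightarrow> real. \<forall>k. a k \<in> {0, 1}}"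

text \<open>C(1/3) = C_{1/3} x C_{1/3} in R^2 (real x real carries the Euclidean norm).\<close>
definition cantor_square :: "(real \<times> real) set" where
  "cantor_square = cantor_third \<times> cantor_third"

definition pinned_distance_set :: "(real \<times> real) \<Rightarrow> (real \<times> real) set \<Rightarrow> real set" where
  "pinned_distance_set t A = {norm (c - t) | c. c \<in> A}"

end

theory Submission
  imports Defs
begin


lemma step_cover:
  fixes u v w r :: real
  assumes w: "0 < w" and h1: "v \<ge> u + w/3" and h2: "v \<le> 3*u + w"
    and r1: "u^2+v^2 \<le> r" and r2: "r \<le> (u+w)^2+(v+w)^2"
  shows "\<exists>i\<in>{0::real,1}. \<exists>j\<in>{0::real,1}. (u + 2*w/3*i)^2 + (v+2*w/3*j)^2 \<le> r \<and>
           r \<le> (u + 2*w/3*i + w/3)^2 + (v + 2*w/3*j + w/3)^2"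
proof -
  have e1: "(u+w/3)^2+(v+w/3)^2 - ((u+2*w/3)^2+v^2) = (2*w/3)*(v-u-w/3)"
    by (simp add: power2_eq_square algebra_simps)
  have e2: "(u+w)^2+(v+w/3)^2 - (u^2+(v+2*w/3)^2) = (2*w/3)*(3*u-v+w)"
    by (simp add: power2_eq_square algebra_simps)
  have e3: "(u+w/3)^2+(v+w)^2 - ((u+2*w/3)^2+(v+2*w/3)^2) = (2*w/3)*(v-u+w/3)"
    by (simp add: power2_eq_square algebra_simps)
  have n1: "(2*w/3)*(v-u-w/3) \<ge> 0" using w h1 by simp
  have n2: "(2*w/3)*(3*u-v+w) \<ge> 0" using w h2 by simp
  have n3: "(2*w/3)*(v-u+w/3) \<ge> 0" using w h1 by simp
  show ?thesis
  proof (cases "r \<le> (u+w/3)^2+(v+w/3)^2")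
    case True
    then show ?thesis using r1 by (rule_tac bexI[of _ 0], rule_tac bexI[of _ 0]) auto
  next
    case c1: False
    show ?thesis
    proof (cases "r \<le> (u+w)^2+(v+w/3)^2")
      case True
      then show ?thesis using c1 e1 n1
        by (rule_tac bexI[of _ 1], rule_tac bexI[of _ 0]) (auto simp: add.assoc)
    next
      case c2: False
      show ?thesis
      proof (cases "r \<le> (u+w/3)^2+(v+w)^2")
        case True
        then show ?thesis using c2 e2 n2
          by (rule_tac bexI[of _ 0], rule_tac bexI[of _ 1]) (auto simp: add.assoc)
      next
        case c3: False
        then show ?thesis using r2 e3 n3
          by (rule_tac bexI[of _ 1], rule_tac bexI[of _ 1]) (auto simp: add.assoc)
      qed
    qed
  qed
qed



lemma digit_summable:
  assumes "\<forall>k. a k \<in> {0::real, 1}"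
  shows "summable (\<lambda>k. a k * (1/3::real)^k)"
proof (rule summable_comparison_test[where g="\<lambda>k. (1/3::real)^k"])
  show "\<exists>N. \<forall>n\<ge>N. norm (a n * (1/3::real)^n) \<le> (1/3)^n"
  proof (intro exI allI impI)
    fix n :: nat
    have "a n = 0 \<or> a n = 1" using assms by auto
    thus "norm (a n * (1/3::real)^n) \<le> (1/3)^n" by (auto simp: abs_mult)
  qed
  show "summable (\<lambda>k. (1/3::real)^k)" by (rule summable_geometric) simp
qed

lemma digit_sum_bounds:
  assumes "\<forall>k. a k \<in> {0::real, 1}"
  shows "0 \<le> (\<Sum>k. a k * (1/3::real)^k) \<and> (\<Sum>k. a k * (1/3::real)^k) \<le> 3/2"
proof
  show "0 \<le> (\<Sum>k. a k * (1/3::real)^k)"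
  proof (rule suminf_nonneg)
    show "summable (\<lambda>k. a k * (1/3::real)^k)" by (rule digit_summable[OF assms])
    fix n
    have "a n = 0 \<or> a n = 1" using assms by auto
    thus "0 \<le> a n * (1/3::real)^n" by auto
  qed
  have "(\<Sum>k. a k * (1/3::real)^k) \<le> (\<Sum>k. (1/3::real)^k)"
  proof (rule suminf_le)
    show "summable (\<lambda>k. a k * (1/3::real)^k)" by (rule digit_summable[OF assms])
    show "summable (\<lambda>k. (1/3::real)^k)" by (rule summable_geometric) simp
    fix n
    have "a n = 0 \<or> a n = 1" using assms by auto
    thus "a n * (1/3::real)^n \<le> (1/3)^n" by auto
  qed
  also have "\<dots> = 3/2" by (subst suminf_geometric) auto
  finally show "(\<Sum>k. a k * (1/3::real)^k) \<le> 3/2" .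
qed

lemma cantor_bounds: "c \<in> cantor_third \<Longrightarrow> 0 \<le> c \<and> c \<le> 1"
proof -
  assume "c \<in> cantor_third"
  then obtain a where a: "\<forall>k. a k \<in> {0::real,1}" and c: "c = (2/3) * (\<Sum>k. a k * (1/3) ^ k)"
    unfolding cantor_third_def by auto
  show ?thesis using digit_sum_bounds[OF a] c by simp
qed

lemma cantor_refl: assumes "c \<in> cantor_third" shows "1 - c \<in> cantor_third"
proof -
  obtain a where a: "\<forall>k. a k \<in> {0::real,1}" and c: "c = (2/3) * (\<Sum>k. a k * (1/3) ^ k)"
    using assms unfolding cantor_third_def by auto
  define b where "b k = 1 - a k" for k
  have b: "\<forall>k. b k \<in> {0::real,1}" using a by (auto simp: b_def)
  have "(\<lambda>k. b k * (1/3::real)^k) = (\<lambda>k. (1/3)^k - a k * (1/3)^k)"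
    by (auto simp: b_def algebra_simps)
  hence "(\<Sum>k. b k * (1/3::real)^k) = (\<Sum>k. (1/3::real)^k) - (\<Sum>k. a k * (1/3)^k)"
    using digit_summable[OF a] by (simp add: suminf_diff summable_geometric)
  also have "(\<Sum>k. (1/3::real)^k) = 3/2" by (subst suminf_geometric) auto
  finally have "1 - c = (2/3) * (\<Sum>k. b k * (1/3) ^ k)" using c by simp
  thus ?thesis using b unfolding cantor_third_def by blast
qed

lemma cantor_first: assumes "c \<in> cantor_third"
  shows "(0 \<le> c \<and> c \<le> 1/3) \<or> (0 \<le> 1 - c \<and> 1 - c \<le> 1/3)"
proof -
  obtain a where a: "\<forall>k. a k \<in> {0::real,1}" and c: "c = (2/3) * (\<Sum>k. a k * (1/3) ^ k)"
    using assms unfolding cantor_third_def by auto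
  define s where "s = (\<Sum>k. a (Suc k) * (1/3::real) ^ k)"
  have a': "\<forall>k. a (Suc k) \<in> {0::real,1}" using a by auto
  have s: "0 \<le> s \<and> s \<le> 3/2" unfolding s_def by (rule digit_sum_bounds[OF a'])
  have "(\<lambda>k. a (Suc k) * (1/3::real) ^ k) sums s" unfolding s_def
    using digit_summable[OF a'] by (simp add: summable_sums)
  hence "(\<lambda>k. a (Suc k) * (1/3::real) ^ Suc k) sums (s/3)"
    using sums_mult2[of _ s "1/3::real"] by (simp add: mult.assoc mult.commute)
  hence "(\<lambda>k. a k * (1/3::real) ^ k) sums (s/3 + a 0)"
    using sums_Suc_iff[of "\<lambda>k. a k * (1/3::real) ^ k"] by simp
  hence "c = (2/3) * (s/3 + a 0)" using c sums_unique by metis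
  then show ?thesis using s a by (cases "a 0 = 0") auto
qed

lemma cantor_shift:
  assumes "p \<in> cantor_third" and "d \<in> {0::real,1}"
  shows "2/3 + 2/9 * d + p/9 \<in> cantor_third"
proof -
  obtain a where a: "\<forall>k. a k \<in> {0::real,1}" and p: "p = (2/3) * (\<Sum>k. a k * (1/3) ^ k)"
    using assms unfolding cantor_third_def by auto
  define s where "s = (\<Sum>k. a k * (1/3::real) ^ k)"
  define b where "b k = (if k = 0 then 1 else if k = 1 then d else a (k - 2))" for k
  have b: "\<forall>k. b k \<in> {0::real,1}" using a assms(2) by (auto simp: b_def)
  have "(\<lambda>k. a k * (1/3::real) ^ k) sums s" unfolding s_def
    using digit_summable[OF a] by (simp add: summable_sums)
  hence "(\<lambda>k. b (Suc (Suc k)) * (1/3::real) ^ Suc (Suc k)) sums (s/9)"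
    using sums_mult2[of _ s "1/9::real"] by (simp add: b_def mult.assoc mult.commute)
  hence "(\<lambda>k. b (Suc k) * (1/3::real) ^ Suc k) sums (s/9 + d/3)"
    using sums_Suc_iff[of "\<lambda>k. b (Suc k) * (1/3::real) ^ Suc k"] by (simp add: b_def)
  hence "(\<lambda>k. b k * (1/3::real) ^ k) sums (s/9 + d/3 + 1)"
    using sums_Suc_iff[of "\<lambda>k. b k * (1/3::real) ^ k"] by (simp add: b_def)
  hence "(\<Sum>k. b k * (1/3::real) ^ k) = s/9 + d/3 + 1" using sums_unique by metis
  hence "2/3 + 2/9 * d + p/9 = (2/3) * (\<Sum>k. b k * (1/3) ^ k)" using p s_def by simp
  thus ?thesis using b unfolding cantor_third_def by blast
qed



lemma core_cover:
  fixes U V r :: real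
  assumes hV1: "V \<ge> U + 1" and hV2: "V + 1 \<le> 3*U"
    and r1: "U^2+V^2 \<le> r" and r2: "r \<le> (U+1)^2+(V+1)^2"
  shows "\<exists>p\<in>cantor_third. \<exists>q\<in>cantor_third. (U+p)^2+(V+q)^2 = r"
proof -
  define G where "G = (\<lambda>P Q::real. (U+P)^2+(V+Q)^2)"
  define inv where "inv = (\<lambda>n (x::real\<times>real). 0 \<le> fst x \<and> 0 \<le> snd x \<and>
     fst x + (1/3::real)^n \<le> 1 \<and> snd x + (1/3::real)^n \<le> 1 \<and> G (fst x) (snd x) \<le> r \<and>
     r \<le> G (fst x + (1/3)^n) (snd x + (1/3)^n) \<and> (n = 0 \<longrightarrow> x = (0,0)))"
  define rel where "rel = (\<lambda>n (x::real\<times>real) y. \<exists>i\<in>{0::real,1}. \<exists>j\<in>{0::real,1}.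
     fst y = fst x + 2/3*(1/3)^n*i \<and> snd y = snd x + 2/3*(1/3)^n*j)"
  have "\<exists>f. \<forall>n. inv n (f n) \<and> rel n (f n) (f (Suc n))"
  proof (rule dependent_nat_choice)
    show "\<exists>x. inv 0 x" using r1 r2 by (intro exI[of _ "(0,0)"]) (simp add: inv_def G_def)
  next
    fix x n assume I: "inv n x"
    define w where "w = (1/3::real)^n"
    have w: "0 < w" unfolding w_def by simp
    obtain P Q where x: "x = (P,Q)" by force
    have I': "0 \<le> P" "0 \<le> Q" "P + w \<le> 1" "Q + w \<le> 1" "(U+P)^2+(V+Q)^2 \<le> r"
      "r \<le> (U+P+w)^2+(V+Q+w)^2"
      using I unfolding inv_def x w_def G_def by (auto simp: add.assoc)
    have "V + Q \<ge> U + P + w/3" using I' hV1 w by linarith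
    moreover have "V + Q \<le> 3*(U+P) + w" using I'(1-4) hV2 w by (simp add: algebra_simps)
    ultimately obtain i j where ij: "i \<in> {0::real,1}" "j \<in> {0::real,1}"
      "(U+P + 2*w/3*i)^2 + (V+Q+2*w/3*j)^2 \<le> r"
      "r \<le> (U+P + 2*w/3*i + w/3)^2 + (V+Q + 2*w/3*j + w/3)^2"
      using step_cover[OF w _ _ I'(5) I'(6)] by blast
    have i01: "0 \<le> i" "i \<le> 1" "0 \<le> j" "j \<le> 1" using ij(1,2) by auto
    have wi: "w*i \<le> w" "w*j \<le> w" using mult_left_mono[of i 1 w] mult_left_mono[of j 1 w] i01 w by auto
    have ws: "(1/3::real)^Suc n = w/3" unfolding w_def by simp
    show "\<exists>y. inv (Suc n) y \<and> rel n x y"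
    proof (intro exI[of _ "(P + 2/3*w*i, Q + 2/3*w*j)"] conjI)
      show "inv (Suc n) (P + 2/3*w*i, Q + 2/3*w*j)"
        unfolding inv_def G_def fst_conv snd_conv ws
      proof (intro conjI)
        show "0 \<le> P + 2/3*w*i" using I' i01 w by simp
        show "0 \<le> Q + 2/3*w*j" using I' i01 w by simp
        show "P + 2/3*w*i + w/3 \<le> 1" using I'(3) wi by linarith
        show "Q + 2/3*w*j + w/3 \<le> 1" using I'(4) wi by linarith
        show "(U + (P + 2/3*w*i))^2 + (V + (Q + 2/3*w*j))^2 \<le> r"
          using ij(3) by (simp add: algebra_simps)
        show "r \<le> (U + (P + 2/3*w*i + w/3))^2 + (V + (Q + 2/3*w*j + w/3))^2"
          using ij(4) by (simp add: algebra_simps)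
      qed simp
      show "rel n x (P + 2/3*w*i, Q + 2/3*w*j)"
        unfolding rel_def x w_def using ij(1,2) by auto
    qed
  qed
  then obtain f where f: "\<And>n. inv n (f n)" "\<And>n. rel n (f n) (f (Suc n))" by blast
  define a where "a n = (fst (f (Suc n)) - fst (f n)) / (2/3*(1/3::real)^n)" for n
  define b where "b n = (snd (f (Suc n)) - snd (f n)) / (2/3*(1/3::real)^n)" for n
  have ab: "a n \<in> {0,1} \<and> b n \<in> {0,1} \<and> fst (f (Suc n)) = fst (f n) + 2/3*(1/3)^n * a n
     \<and> snd (f (Suc n)) = snd (f n) + 2/3*(1/3)^n * b n" for n
    using f(2)[of n] unfolding rel_def a_def b_def by auto
  have fs: "fst (f n) = 2/3 * (\<Sum>k<n. a k * (1/3)^k) \<and> snd (f n) = 2/3 * (\<Sum>k<n. b k * (1/3)^k)" for n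
  proof (induction n)
    case 0
    then show ?case using f(1)[of 0] unfolding inv_def by simp
  next
    case (Suc n)
    then show ?case using ab[of n] by (simp add: algebra_simps)
  qed
  have ad: "\<forall>k. a k \<in> {0,1}" and bd: "\<forall>k. b k \<in> {0,1}" using ab by auto
  define p where "p = 2/3 * (\<Sum>k. a k * (1/3::real)^k)"
  define q where "q = 2/3 * (\<Sum>k. b k * (1/3::real)^k)"
  have pC: "p \<in> cantor_third" unfolding p_def cantor_third_def using ad by blast
  have qC: "q \<in> cantor_third" unfolding q_def cantor_third_def using bd by blast
  have ep: "(\<lambda>n. fst (f n)) = (\<lambda>n. 2/3 * (\<Sum>k<n. a k * (1/3)^k))" using fs by auto
  have lp: "(\<lambda>n. fst (f n)) \<longlonglongrightarrow> p" unfolding ep p_def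
    by (intro tendsto_mult_left summable_LIMSEQ digit_summable[OF ad])
  have eq: "(\<lambda>n. snd (f n)) = (\<lambda>n. 2/3 * (\<Sum>k<n. b k * (1/3)^k))" using fs by auto
  have lq: "(\<lambda>n. snd (f n)) \<longlonglongrightarrow> q" unfolding eq q_def
    by (intro tendsto_mult_left summable_LIMSEQ digit_summable[OF bd])
  have l0: "(\<lambda>n. (1/3::real)^n) \<longlonglongrightarrow> 0" by (rule LIMSEQ_realpow_zero) auto
  have L1: "(\<lambda>n. G (fst (f n)) (snd (f n))) \<longlonglongrightarrow> G p q"
    unfolding G_def by (intro tendsto_intros lp lq)
  have L2: "(\<lambda>n. G (fst (f n) + (1/3)^n) (snd (f n) + (1/3)^n)) \<longlonglongrightarrow> G (p+0) (q+0)"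
    unfolding G_def by (intro tendsto_intros lp lq l0)
  have "G p q \<le> r"
    by (rule LIMSEQ_le_const2[OF L1]) (use f(1) in \<open>auto simp: inv_def\<close>)
  moreover have "r \<le> G p q"
    using LIMSEQ_le_const[OF L2, of r] f(1) by (auto simp: inv_def)
  ultimately show ?thesis using pC qC unfolding G_def by force
qed



lemma pinned_sym:
  assumes "\<And>z. z \<in> cantor_square \<Longrightarrow> T z \<in> cantor_square" "\<And>z. T (T z) = z"
    "\<And>x y. norm (T x - T y) = norm (x - y)"
  shows "interior (pinned_distance_set (T t) cantor_square) \<noteq> {} \<Longrightarrow>
         interior (pinned_distance_set t cantor_square) \<noteq> {}"
proof -
  have "pinned_distance_set (T t) cantor_square \<subseteq> pinned_distance_set t cantor_square"
  proof
    fix d assume "d \<in> pinned_distance_set (T t) cantor_square"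
    then obtain c where c: "c \<in> cantor_square" "d = norm (c - T t)"
      unfolding pinned_distance_set_def by auto
    have "d = norm (T c - t)" using c(2) assms(3)[of "T c" t] assms(2)[of c] by simp
    thus "d \<in> pinned_distance_set t cantor_square"
      unfolding pinned_distance_set_def using assms(1)[OF c(1)] by blast
  qed
  thus "interior (pinned_distance_set (T t) cantor_square) \<noteq> {} \<Longrightarrow>
         interior (pinned_distance_set t cantor_square) \<noteq> {}"
    using interior_mono by blast
qed

lemma refl_x: "interior (pinned_distance_set (1 - fst t, snd t) cantor_square) \<noteq> {} \<Longrightarrow>
         interior (pinned_distance_set t cantor_square) \<noteq> {}"
  by (rule pinned_sym[where T="\<lambda>z. (1 - fst z, snd z)"])
     (auto simp: cantor_square_def cantor_refl norm_Pair power2_commute)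

lemma refl_y: "interior (pinned_distance_set (fst t, 1 - snd t) cantor_square) \<noteq> {} \<Longrightarrow>
         interior (pinned_distance_set t cantor_square) \<noteq> {}"
  by (rule pinned_sym[where T="\<lambda>z. (fst z, 1 - snd z)"])
     (auto simp: cantor_square_def cantor_refl norm_Pair power2_commute)

lemma swap_xy: "interior (pinned_distance_set (snd t, fst t) cantor_square) \<noteq> {} \<Longrightarrow>
         interior (pinned_distance_set t cantor_square) \<noteq> {}"
  by (rule pinned_sym[where T="\<lambda>z. (snd z, fst z)"])
     (auto simp: cantor_square_def norm_Pair add.commute)

lemma base_case:
  fixes t1 t2 :: real
  assumes "0 \<le> t1" "t1 \<le> 1/3" "0 \<le> t2" "t2 \<le> 1/3" "t2 \<le> t1 + 1/9"
  shows "interior (pinned_distance_set (t1, t2) cantor_square) \<noteq> {}"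
proof -
  define U where "U = 6 - 9*t1"
  define V where "V = 8 - 9*t2"
  have UV: "V \<ge> U + 1" "V + 1 \<le> 3*U" "U \<ge> 3" "V \<ge> 5" using assms by (auto simp: U_def V_def)
  define lo where "lo = sqrt (U^2+V^2) / 9"
  define hi where "hi = sqrt ((U+1)^2+(V+1)^2) / 9"
  have e1: "(U+1)^2 = U^2 + 2*U + 1" "(V+1)^2 = V^2 + 2*V + 1" by (simp_all add: power2_eq_square algebra_simps)
  have "U^2+V^2 < (U+1)^2+(V+1)^2" unfolding e1 using UV by linarith
  hence lohi: "lo < hi" unfolding lo_def hi_def by simp
  have sub: "{lo<..<hi} \<subseteq> pinned_distance_set (t1, t2) cantor_square"
  proof
    fix d assume d: "d \<in> {lo<..<hi}"
    have "0 \<le> lo" unfolding lo_def by simp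
    moreover have "lo < d" using d by simp
    ultimately have d0: "0 < d" by linarith
    define r where "r = (9*d)^2"
    have "sqrt (U^2+V^2) \<le> 9*d" using d unfolding lo_def by simp
    hence r1: "U^2+V^2 \<le> r" unfolding r_def by (rule sqrt_le_D)
    have "9*d \<le> sqrt ((U+1)^2+(V+1)^2)" using d unfolding hi_def by simp
    hence "(9*d)^2 \<le> (sqrt ((U+1)^2+(V+1)^2))^2" by (rule power_mono) (use d0 in simp)
    hence r2: "r \<le> (U+1)^2+(V+1)^2" unfolding r_def by simp
    obtain p q where pq: "p \<in> cantor_third" "q \<in> cantor_third" "(U+p)^2+(V+q)^2 = r"
      using core_cover[OF UV(1,2) r1 r2] by blast
    define c where "c = (2/3 + 2/9*0 + p/9, 2/3 + 2/9*1 + q/9)"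
    have cC: "c \<in> cantor_square" unfolding c_def cantor_square_def
      using cantor_shift[OF pq(1), of 0] cantor_shift[OF pq(2), of 1] by auto
    have "c - (t1,t2) = ((U+p)/9, (V+q)/9)" unfolding c_def U_def V_def by (simp add: field_simps)
    hence "norm (c - (t1,t2)) = sqrt (((U+p)/9)^2 + ((V+q)/9)^2)" by (simp add: norm_Pair power_divide)
    also have "((U+p)/9)^2 + ((V+q)/9)^2 = d^2" using pq(3) unfolding r_def
      by (simp add: power_divide power_mult_distrib add_divide_distrib[symmetric])
    also have "sqrt (d^2) = d" using d0 by simp
    finally show "d \<in> pinned_distance_set (t1, t2) cantor_square"
      unfolding pinned_distance_set_def using cC by blast
  qed
  have "{lo<..<hi} \<subseteq> interior (pinned_distance_set (t1, t2) cantor_square)"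
    using sub by (intro interior_maximal) auto
  thus ?thesis using lohi by auto
qed

lemma quad_case:
  fixes t1 t2 :: real
  assumes "0 \<le> t1" "t1 \<le> 1/3" "0 \<le> t2" "t2 \<le> 1/3"
  shows "interior (pinned_distance_set (t1, t2) cantor_square) \<noteq> {}"
proof (cases "t2 \<le> t1 + 1/9")
  case True
  then show ?thesis using base_case assms by blast
next
  case False
  then show ?thesis using base_case[of t2 t1] assms swap_xy[of "(t1,t2)"] by simp
qed

theorem mainTheorem6:
  assumes "t \<in> cantor_square"
  shows "interior (pinned_distance_set t cantor_square) \<noteq> {}"
proof -
  obtain t1 t2 where t: "t = (t1,t2)" "t1 \<in> cantor_third" "t2 \<in> cantor_third"
    using assms unfolding cantor_square_def by auto
  from cantor_first[OF t(2)] cantor_first[OF t(3)] show ?thesis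
  proof (elim disjE conjE)
    assume "0 \<le> t1" "t1 \<le> 1/3" "0 \<le> t2" "t2 \<le> 1/3"
    then show ?thesis using quad_case t(1) by blast
  next
    assume "0 \<le> t1" "t1 \<le> 1/3" "0 \<le> 1 - t2" "1 - t2 \<le> 1/3"
    then show ?thesis using quad_case[of t1 "1-t2"] refl_y[of t] t(1) by simp
  next
    assume "0 \<le> 1 - t1" "1 - t1 \<le> 1/3" "0 \<le> t2" "t2 \<le> 1/3"
    then show ?thesis using quad_case[of "1-t1" t2] refl_x[of t] t(1) by simp
  next
    assume "0 \<le> 1 - t1" "1 - t1 \<le> 1/3" "0 \<le> 1 - t2" "1 - t2 \<le> 1/3"
    then show ?thesis using quad_case[of "1-t1" "1-t2"] refl_x[of t] refl_y[of "(1-t1,t2)"] t(1) by simp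
  qed
qed

end
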